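(* Fix an integer $k\geq1$ and $V=\{0,\ldots,k\}$. Let $\varphi$ be a Boolean function on $V$ with $\#\varphi\neq|\mathrm{eul}(\varphi)|$. Then there exist satisfying valuations $\nu,\nu'$ of $\varphi$ with $(-1)^{|\nu|}\neq(-1)^{|\nu'|}$ and a simple path $\nu=\nu_0-\nu_1-\cdots-\nu_{n+1}=\nu'$ in $\mathbf G_V$ (so $n$ is even) such that $\nu_i\notin\mathrm{sat}(\varphi)$ for all $1\leq i\leq n$.
   Context: A valuation is a subset $\nu\subseteq V$; $\nu^{(l)}$ is $\nu$ with membership of $l$ flipped. A Boolean function on $V$ is a map $\varphi:2^V\to\{\text{false},\text{true}\}$; $\mathrm{sat}(\varphi)$ is its set of satisfying valuations, $\#\varphi=|\mathrm{sat}(\varphi)|$, and $\mathrm{eul}(\varphi)=\sum_{\nu\in\mathrm{sat}(\varphi)}(-1)^{|\nu|}$. $\mathbf G_V$ is the undirected graph with vertex set $2^V$ and edges $\{\nu,\nu^{(l)}\}$ for $\nu\subseteq V$, $l\in V$. *)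

theory Defs
  imports Main
begin

text \<open>Valuations are sets of naturals; a Boolean function on V is modelled as a
predicate on nat set, of which only the values on subsets of V matter.\<close>

definition flip :: "nat \<Rightarrow> nat set \<Rightarrow> nat set" where
  "flip l \<nu> = (if l \<in> \<nu> then \<nu> - {l} else insert l \<nu>)"

definition sat :: "nat set \<Rightarrow> (nat set \<Rightarrow> bool) \<Rightarrow> nat set set" where
  "sat V \<phi> = {\<nu>. \<nu> \<subseteq> V \<and> \<phi> \<nu>}"

definition eul :: "nat set \<Rightarrow> (nat set \<Rightarrow> bool) \<Rightarrow> int" where
  "eul V \<phi> = (\<Sum>\<nu>\<in>sat V \<phi>. (-1) ^ card \<nu>)"

definition cube_edge :: "nat set \<Rightarrow> nat set \<Rightarrow> nat set \<Rightarrow> bool" where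
  "cube_edge V a b \<longleftrightarrow> a \<subseteq> V \<and> b \<subseteq> V \<and> (\<exists>l\<in>V. b = flip l a)"

end

theory Submission
  imports Defs
begin

definition sd :: "nat set \<Rightarrow> nat set \<Rightarrow> nat set" where
  "sd a b = (a - b) \<union> (b - a)"

lemma neg1_pow: "(-1::int) ^ n = (if even n then 1 else -1)"
  by simp

lemma par_sd:
  assumes "finite a" "finite b"
  shows "even (card a + card b) \<longleftrightarrow> even (card (sd a b))"
proof -
  have 1: "card a = card (a - b) + card (a \<inter> b)"
  proof -
    have "a = (a - b) \<union> (a \<inter> b)" by auto
    hence "card a = card ((a - b) \<union> (a \<inter> b))" by simp
    also have "\<dots> = card (a - b) + card (a \<inter> b)"
      by (rule card_Un_disjoint) (use assms in auto)
    finally show ?thesis .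
  qed
  have 2: "card b = card (b - a) + card (a \<inter> b)"
  proof -
    have "b = (b - a) \<union> (a \<inter> b)" by auto
    hence "card b = card ((b - a) \<union> (a \<inter> b))" by simp
    also have "\<dots> = card (b - a) + card (a \<inter> b)"
      by (rule card_Un_disjoint) (use assms in auto)
    finally show ?thesis .
  qed
  have 3: "card (sd a b) = card (a - b) + card (b - a)"
    unfolding sd_def using assms by (subst card_Un_disjoint) auto
  show ?thesis using 1 2 3 by (simp only:) presburger
qed

lemma sd_sd: "sd a (sd a b) = b" unfolding sd_def by auto

lemma flip_sd: "x \<notin> T \<Longrightarrow> sd a (insert x T) = flip x (sd a T)"
  unfolding sd_def flip_def by auto

lemma take_Suc_set: "i < length xs \<Longrightarrow> set (take (Suc i) xs) = insert (xs ! i) (set (take i xs))"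
  by (simp add: take_Suc_conv_app_nth)

lemma card_take: "distinct xs \<Longrightarrow> i \<le> length xs \<Longrightarrow> card (set (take i xs)) = i"
  by (simp add: distinct_card)

lemma sd_inj: "sd a S = sd a T \<Longrightarrow> S = T"
  by (metis sd_sd)

theorem lemma5p11:
  fixes k :: nat and \<phi> :: "nat set \<Rightarrow> bool"
  assumes "k \<ge> 1"
    and "int (card (sat {0..k} \<phi>)) \<noteq> \<bar>eul {0..k} \<phi>\<bar>"
  shows "\<exists>\<nu> \<nu>' (ps :: nat set list) n.
           \<nu> \<in> sat {0..k} \<phi> \<and> \<nu>' \<in> sat {0..k} \<phi> \<and>
           (-1::int) ^ card \<nu> \<noteq> (-1) ^ card \<nu>' \<and>
           length ps = n + 2 \<and> ps ! 0 = \<nu> \<and> ps ! (n + 1) = \<nu>' \<and>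
           distinct ps \<and>
           (\<forall>i < n + 1. cube_edge {0..k} (ps ! i) (ps ! Suc i)) \<and>
           (\<forall>i \<in> {1..n}. ps ! i \<notin> sat {0..k} \<phi>)"
proof -
  define V where "V = {0..k}"
  define S where "S = sat V \<phi>"
  have A2: "int (card S) \<noteq> \<bar>eul V \<phi>\<bar>" using assms(2) unfolding S_def V_def .
  have finS: "finite S" unfolding S_def sat_def V_def
    by (rule finite_subset[of _ "Pow {0..k}"]) auto
  have finmem: "finite a" if "a \<in> S" for a
    using that unfolding S_def sat_def V_def using finite_subset[of a "{0..k}"] by auto
  define Q where "Q = (\<lambda>a b. a \<in> S \<and> b \<in> S \<and> (-1::int) ^ card a \<noteq> (-1) ^ card b)"
  define P where "P = (\<lambda>q. Q (fst q) (snd q))"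
  have "\<exists>a b. P (a,b)"
  proof (rule ccontr)
    assume nex: "\<not> ?thesis"
    have same: "(-1::int) ^ card a = (-1) ^ card b" if "a \<in> S" "b \<in> S" for a b
    proof (rule ccontr)
      assume "(-1::int) ^ card a \<noteq> (-1) ^ card b"
      hence "P (a,b)" unfolding P_def Q_def using that by simp
      thus False using nex by blast
    qed
    show False
    proof (cases "S = {}")
      case True
      hence "eul V \<phi> = 0" unfolding eul_def S_def[symmetric] by simp
      with True A2 show False by simp
    next
      case False
      then obtain a where a: "a \<in> S" by auto
      have "eul V \<phi> = (\<Sum>\<nu>\<in>S. (-1::int) ^ card a)"
        unfolding eul_def S_def[symmetric] by (rule sum.cong[OF refl], rule same[OF _ a])
      also have "\<dots> = of_nat (card S) * (-1) ^ card a" by simp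
      finally have "\<bar>eul V \<phi>\<bar> = int (card S)" by (simp add: abs_mult power_abs)
      then show False using A2 by simp
    qed
  qed
  then obtain p where "P p" by auto
  then obtain p0 where p0: "P p0" and least: "\<And>q. P q \<Longrightarrow> card (sd (fst p0) (snd p0)) \<le> card (sd (fst q) (snd q))"
    using ex_has_least_nat[of P p "\<lambda>q. card (sd (fst q) (snd q))"] by blast
  obtain \<nu> \<nu>' where pe: "p0 = (\<nu>, \<nu>')" by (cases p0)
  have nS: "\<nu> \<in> S" and nS': "\<nu>' \<in> S" and par: "(-1::int) ^ card \<nu> \<noteq> (-1) ^ card \<nu>'"
    using p0 pe unfolding P_def Q_def by auto
  have leastab: "card (sd \<nu> \<nu>') \<le> card (sd a b)" if "a \<in> S" "b \<in> S" "(-1::int) ^ card a \<noteq> (-1) ^ card b" for a b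
    using least[of "(a,b)"] that pe unfolding P_def Q_def by auto
  have nV: "\<nu> \<subseteq> V" "\<nu>' \<subseteq> V" using nS nS' unfolding S_def sat_def by auto
  define D where "D = sd \<nu> \<nu>'"
  have finD: "finite D" unfolding D_def sd_def using finmem[OF nS] finmem[OF nS'] by auto
  define xs where "xs = sorted_list_of_set D"
  have xsd: "distinct xs" and xsset: "set xs = D" unfolding xs_def using finD by auto
  define d where "d = length xs"
  have dD: "d = card D" unfolding d_def using xsd xsset distinct_card by metis
  have "even (card \<nu> + card \<nu>') \<noteq> even (card \<nu>' + card \<nu>')" using par
    by (auto simp: neg1_pow split: if_splits)
  hence oddd: "odd d" using par_sd[OF finmem[OF nS] finmem[OF nS']] unfolding dD D_def
    by auto
  hence dpos: "d \<ge> 1" by (cases d) auto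
  define pp where "pp = (\<lambda>i. sd \<nu> (set (take i xs)))"
  define ps where "ps = map pp [0..<d+1]"
  define n where "n = d - 1"
  have len: "length ps = n + 2" unfolding ps_def n_def using dpos by simp
  have nth: "ps ! i = pp i" if "i \<le> d" for i
    unfolding ps_def using that by (simp del: upt_Suc)
  have p0': "ps ! 0 = \<nu>" using nth[of 0] unfolding pp_def sd_def by auto
  have pd: "ps ! (n+1) = \<nu>'"
  proof -
    have "n + 1 = d" unfolding n_def using dpos by simp
    hence "ps ! (n+1) = pp d" using nth[of d] by simp
    also have "pp d = sd \<nu> D" unfolding pp_def d_def using xsset by simp
    also have "\<dots> = \<nu>'" unfolding D_def by (rule sd_sd)
    finally show ?thesis .
  qed
  have Dsub: "D \<subseteq> V" using nV unfolding D_def sd_def by auto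
  have ppV: "pp i \<subseteq> V" for i
  proof -
    have "set (take i xs) \<subseteq> V" using set_take_subset[of i xs] xsset Dsub by auto
    thus ?thesis unfolding pp_def sd_def using nV by auto
  qed
  have dist: "distinct ps"
    unfolding ps_def distinct_map
  proof
    show "distinct [0..<d+1]" by simp
    show "inj_on pp (set [0..<d + 1])"
    proof (rule inj_onI)
      fix i j assume i: "i \<in> set [0..<d + 1]" and j: "j \<in> set [0..<d + 1]" and e: "pp i = pp j"
      hence "set (take i xs) = set (take j xs)" unfolding pp_def using sd_inj by blast
      hence "card (set (take i xs)) = card (set (take j xs))" by simp
      thus "i = j" using card_take[OF xsd, of i] card_take[OF xsd, of j] i j unfolding d_def by auto
    qed
  qed
  have edges: "\<forall>i < n + 1. cube_edge {0..k} (ps ! i) (ps ! Suc i)"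
  proof (intro allI impI)
    fix i assume i: "i < n + 1"
    hence id: "i < d" unfolding n_def using dpos by simp
    have "xs ! i \<notin> set (take i xs)" using xsd id unfolding d_def
      by (auto simp: in_set_conv_nth nth_eq_iff_index_eq)
    hence "pp (Suc i) = flip (xs ! i) (pp i)"
      unfolding pp_def using take_Suc_set[of i xs] id flip_sd unfolding d_def by simp
    moreover have "xs ! i \<in> V" using id xsset Dsub unfolding d_def by auto
    ultimately show "cube_edge {0..k} (ps ! i) (ps ! Suc i)"
    proof -
      have "ps ! i \<subseteq> V" "ps ! Suc i \<subseteq> V" using nth[of i] nth[of "Suc i"] id ppV by auto
      moreover have "ps ! Suc i = flip (xs ! i) (ps ! i)" using nth[of i] nth[of "Suc i"] id \<open>pp (Suc i) = _\<close> by simp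
      ultimately show ?thesis unfolding cube_edge_def V_def[symmetric] using \<open>xs ! i \<in> V\<close> by blast
    qed
  qed
  have inner: "\<forall>i \<in> {1..n}. ps ! i \<notin> sat {0..k} \<phi>"
  proof
    fix i assume i: "i \<in> {1..n}"
    hence id: "0 < i" "i < d" unfolding n_def using dpos by auto
    show "ps ! i \<notin> sat {0..k} \<phi>"
    proof
      assume "ps ! i \<in> sat {0..k} \<phi>"
      hence pS: "pp i \<in> S" using nth[of i] id unfolding S_def V_def by simp
      define T where "T = set (take i xs)"
      have Tsub: "T \<subseteq> D" unfolding T_def using set_take_subset[of i xs] xsset by auto
      have c1: "card (sd \<nu> (pp i)) = i" unfolding pp_def sd_sd
        using card_take[OF xsd, of i] id unfolding d_def by simp
      have "sd (pp i) \<nu>' = D - T" unfolding pp_def T_def[symmetric] D_def sd_def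
        using Tsub unfolding D_def sd_def by auto
      moreover have "card (D - T) = d - i"
      proof -
        have "finite T" unfolding T_def by simp
        hence "card (D - T) = card D - card T" using card_Diff_subset[OF _ Tsub] by simp
        moreover have "card T = i" unfolding T_def using card_take[OF xsd, of i] id unfolding d_def by simp
        ultimately show ?thesis using dD by simp
      qed
      ultimately have c2: "card (sd (pp i) \<nu>') = d - i" by simp
      have fp: "finite (pp i)" using finmem[OF pS] .
      have A: "(-1::int) ^ card \<nu> \<noteq> (-1) ^ card (pp i) \<or> (-1::int) ^ card (pp i) \<noteq> (-1) ^ card \<nu>'"
        using par by auto
      thus False
      proof
        assume "(-1::int) ^ card \<nu> \<noteq> (-1) ^ card (pp i)"
        from leastab[OF nS pS this] c1 id show False unfolding D_def[symmetric] dD by simp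
      next
        assume "(-1::int) ^ card (pp i) \<noteq> (-1) ^ card \<nu>'"
        from leastab[OF pS nS' this] c2 id show False unfolding D_def[symmetric] dD by simp
      qed
    qed
  qed
  show ?thesis
    apply (rule exI[of _ \<nu>], rule exI[of _ \<nu>'], rule exI[of _ ps], rule exI[of _ n])
    using nS nS' par len p0' pd dist edges inner unfolding S_def V_def
    by (intro conjI) assumption+
qed

end
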